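(* Fix $C<1$ and let $\delta=\delta(C)=C-1-\log C>0$. Fix $M>\frac{1}{\delta}$ and fix $\theta<\min(M\delta-1,1)$. Then there is a positive constant $L_1$ such that \[ \mathbb{P}\Big(\bigcap_{1\le j\le n}\{\#\mathcal{E}_j\le M\log n\}\Big)\ \ge\ 1-\frac{1}{n^{\theta}} \] for all $n\ge L_1$.
   Context: Let $C>0$ be a constant and $(\alpha_n)_{n\ge1}$ a sequence of nonnegative reals with $\alpha_n\to0$. For each $n$, consider the complete graph $K_n$ on vertex set $\{1,\dots,n\}$; each edge $e$ of $K_n$ is independently open with probability $p_n(e)$ and closed otherwise, where $\frac{C-\alpha_n}{n}\le p_n(e)\le\frac{C+\alpha_n}{n}$ for every edge $e$. Let $G$ be the resulting random graph of open edges, with probability measure $\mathbb{P}$. For a vertex $i$, $\mathcal{E}_i$ denotes the open component of $G$ containing $i$ (the set of vertices joined to $i$ by a path of open edges, together with $i$ itself), and $\#\mathcal{E}_i$ its number of vertices. $\log$ is the natural logarithm. *)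

theory Defs
  imports "HOL-Probability.Probability"
begin

definition edges_K :: "nat \<Rightarrow> nat set set" where
  "edges_K n = {{i, j} | i j. i \<in> {1..n} \<and> j \<in> {1..n} \<and> i \<noteq> j}"

text \<open>Random graph: each edge e of K_n is independently open (True) with probability q e.
  Edges outside K_n are set to False (irrelevant).\<close>
definition random_graph :: "nat \<Rightarrow> (nat set \<Rightarrow> real) \<Rightarrow> (nat set \<Rightarrow> bool) pmf" where
  "random_graph n q = Pi_pmf (edges_K n) False (\<lambda>e. bernoulli_pmf (q e))"

definition open_comp :: "nat \<Rightarrow> (nat set \<Rightarrow> bool) \<Rightarrow> nat \<Rightarrow> nat set" where
  "open_comp n G i =
     {j. (i, j) \<in> {(u, v). u \<in> {1..n} \<and> v \<in> {1..n} \<and> u \<noteq> v \<and> G {u, v}}\<^sup>*}"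

end

theory Submission
  imports Defs
begin

definition erel :: "nat set \<Rightarrow> (nat set \<Rightarrow> bool) \<Rightarrow> (nat \<times> nat) set" where
  "erel V G = {(u, v). u \<in> V \<and> v \<in> V \<and> u \<noteq> v \<and> G {u, v}}"

definition reach :: "nat set \<Rightarrow> (nat set \<Rightarrow> bool) \<Rightarrow> nat set \<Rightarrow> nat set" where
  "reach V G A = {w. \<exists>a\<in>A. (a, w) \<in> (erel V G)\<^sup>*}"

lemma reach_subset: "A \<subseteq> V \<Longrightarrow> reach V G A \<subseteq> V"
proof
  fix w assume A: "A \<subseteq> V" and "w \<in> reach V G A"
  then obtain a where a: "a \<in> A" "(a, w) \<in> (erel V G)\<^sup>*" by (auto simp: reach_def)
  from a(2) show "w \<in> V"
    by (induction rule: rtrancl_induct) (use a A in \<open>auto simp: erel_def\<close>)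
qed

lemma reach_cong:
  assumes "\<And>u v. u \<in> V \<Longrightarrow> v \<in> V \<Longrightarrow> u \<noteq> v \<Longrightarrow> G {u,v} = G' {u,v}"
  shows "reach V G A = reach V G' A"
proof -
  have "erel V G = erel V G'" using assms by (auto simp: erel_def)
  thus ?thesis by (simp add: reach_def)
qed

lemma reach_mono_rel: "erel (V - {a}) G \<subseteq> erel V G" by (auto simp: erel_def)

lemma reach_step:
  assumes "a \<in> A" "A \<subseteq> V"
  shows "reach V G A = insert a (reach (V - {a}) G ((A - {a}) \<union> {w \<in> V - A. G {a, w}}))"
    (is "_ = insert a (reach ?V' G ?A')")
proof
  show "insert a (reach ?V' G ?A') \<subseteq> reach V G A"
  proof
    fix w assume "w \<in> insert a (reach ?V' G ?A')"
    then consider "w = a" | b where "b \<in> ?A'" "(b, w) \<in> (erel ?V' G)\<^sup>*"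
      by (auto simp: reach_def)
    then show "w \<in> reach V G A"
    proof cases
      case 1 then show ?thesis using assms by (auto simp: reach_def)
    next
      case 2
      have bw: "(b, w) \<in> (erel V G)\<^sup>*" using 2(2) rtrancl_mono[OF reach_mono_rel] by blast
      show ?thesis
      proof (cases "b \<in> A")
        case True then show ?thesis using bw by (auto simp: reach_def)
      next
        case False
        then have "b \<in> V" "b \<noteq> a" "G {a, b}" using 2(1) assms(1) by auto
        then have "(a, b) \<in> erel V G" using assms by (auto simp: erel_def)
        then have "(a, w) \<in> (erel V G)\<^sup>*" using bw by auto
        then show ?thesis using assms by (auto simp: reach_def)
      qed
    qed
  qed
next
  have sub: "reach ?V' G ?A' \<subseteq> ?V'" by (rule reach_subset) (use assms in auto)
  show "reach V G A \<subseteq> insert a (reach ?V' G ?A')"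
  proof
    fix w assume "w \<in> reach V G A"
    then obtain b where b: "b \<in> A" "(b, w) \<in> (erel V G)\<^sup>*" by (auto simp: reach_def)
    from b(2) show "w \<in> insert a (reach ?V' G ?A')"
    proof (induction rule: rtrancl_induct)
      case base
      then show ?case using b(1) by (cases "b = a") (auto simp: reach_def)
    next
      case (step y z)
      show ?case
      proof (cases "y = a")
        case True
        then have "z \<in> V" "z \<noteq> a" "G {a, z}" using step(2) by (auto simp: erel_def)
        then have "z \<in> ?A'" by auto
        then show ?thesis by (auto simp: reach_def)
      next
        case False
        then have y: "y \<in> reach ?V' G ?A'" using step(3) by auto
        show ?thesis
        proof (cases "z = a")
          case True then show ?thesis by simp
        next
          case False
          have "y \<in> ?V'" using y sub by blast
          then have "(y, z) \<in> erel ?V' G" using step(2) False by (auto simp: erel_def)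
          then show ?thesis using y by (auto simp: reach_def intro: rtrancl_into_rtrancl)
        qed
      qed
    qed
  qed
qed

lemma bern_int:
  assumes "0 \<le> q" "q \<le> 1" "1 \<le> F"
  shows "(\<integral>\<^sup>+b. ennreal (if b then F else 1) \<partial>bernoulli_pmf q) = ennreal (1 + q * (F - 1))"
proof -
  have "(\<integral>\<^sup>+b. ennreal (if b then F else 1) \<partial>bernoulli_pmf q)
     = ennreal (if True then F else 1) * ennreal q + ennreal (if False then F else 1) * ennreal (1 - q)"
    using assms by (subst nn_integral_measure_pmf_support[of UNIV]) (simp_all add: UNIV_bool)
  also have "\<dots> = ennreal (F * q + (1 - q))"
    using assms by (simp add: ennreal_mult[symmetric] ennreal_plus[symmetric] del: ennreal_plus)
  also have "F * q + (1 - q) = 1 + q * (F - 1)" by (simp add: algebra_simps)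
  finally show ?thesis .
qed

lemma key:
  fixes q :: "nat set \<Rightarrow> real" and \<beta> F lam :: real and m :: nat
  assumes "finite E" "finite V" "A \<subseteq> V"
    and edges: "\<And>u v. u \<in> V \<Longrightarrow> v \<in> V \<Longrightarrow> u \<noteq> v \<Longrightarrow> {u,v} \<in> E \<and> q {u,v} \<le> \<beta>"
    and qprob: "\<And>e. e \<in> E \<Longrightarrow> 0 \<le> q e \<and> q e \<le> 1"
    and "card V \<le> m" "1 \<le> F" "0 \<le> \<beta>" and cond: "exp lam * (1 + \<beta> * (F - 1)) ^ m \<le> F"
  shows "(\<integral>\<^sup>+G. ennreal (exp (lam * card (reach V G A))) \<partial>Pi_pmf E False (\<lambda>e. bernoulli_pmf (q e)))
          \<le> ennreal (F ^ card A)"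
  using assms
proof (induction "card V" arbitrary: V A E rule: less_induct)
  case less
  note IH = less.hyps
  show ?case
  proof (cases "A = {}")
    case True
    have "reach V G {} = {}" for G by (simp add: reach_def)
    then show ?thesis using True by (simp add: measure_pmf.emeasure_space_1)
  next
    case False
    then obtain a where aA: "a \<in> A" by blast
    define S where "S = (\<lambda>w. {a, w}) ` (V - A)"
    define E2 where "E2 = E - S"
    define Bq where "Bq = (\<lambda>e. bernoulli_pmf (q e))"
    define N where "N = (\<lambda>g1 :: nat set \<Rightarrow> bool. {w \<in> V - A. g1 {a, w}})"
    define A' where "A' = (\<lambda>g1. (A - {a}) \<union> N g1)"
    have aV: "a \<in> V" using aA less.prems by auto
    have notS: "{u, v} \<notin> S" if "u \<in> V - {a}" "v \<in> V - {a}" for u v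
    proof
      assume "{u, v} \<in> S"
      then obtain w where "{u, v} = {a, w}" unfolding S_def by blast
      then have "a \<in> {u, v}" by (metis insertI1)
      then show False using that by auto
    qed
    have SE: "S \<subseteq> E" using less.prems(4) aV aA by (auto simp: S_def)
    have finS: "finite S" using less.prems(2) by (simp add: S_def)
    have finE2: "finite E2" using less.prems(1) by (simp add: E2_def)
    have ES: "E = S \<union> E2" using SE by (auto simp: E2_def)
    have disj: "S \<inter> E2 = {}" by (auto simp: E2_def)
    have Pi_split: "Pi_pmf E False Bq = map_pmf (\<lambda>(f,g) x. if x \<in> S then f x else g x)
             (pair_pmf (Pi_pmf S False Bq) (Pi_pmf E2 False Bq))"
      unfolding ES by (rule Pi_pmf_union[OF finS finE2 disj])
    have cardV': "card (V - {a}) < card V" using aV less.prems(2) by (meson card_Diff1_less)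
    have A'sub: "A' g1 \<subseteq> V - {a}" for g1 using less.prems(3) aA by (auto simp: A'_def N_def)
    have finN: "finite (N g1)" for g1 using less.prems(2) by (simp add: N_def)
    have cardA': "card (A' g1) = (card A - 1) + card (N g1)" for g1
    proof -
      have "card (A' g1) = card (A - {a}) + card (N g1)"
        unfolding A'_def using finN[of g1] less.prems(2,3)
        by (intro card_Un_disjoint) (auto simp: N_def intro: finite_subset)
      moreover have "card (A - {a}) = card A - 1"
        using aA by simp
      ultimately show ?thesis by simp
    qed
    have reach_eq: "card (reach V (\<lambda>x. if x \<in> S then g1 x else g2 x) A)
        = Suc (card (reach (V - {a}) g2 (A' g1)))" for g1 g2
    proof -
      let ?G = "\<lambda>x. if x \<in> S then g1 x else g2 x"
      have "reach V ?G A = insert a (reach (V - {a}) ?G ((A - {a}) \<union> {w \<in> V - A. ?G {a, w}}))"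
        by (rule reach_step[OF aA less.prems(3)])
      also have "{w \<in> V - A. ?G {a, w}} = N g1" unfolding N_def
      proof (intro Collect_cong)
        fix w show "(w \<in> V - A \<and> ?G {a, w}) = (w \<in> V - A \<and> g1 {a, w})"
        proof (cases "w \<in> V - A")
          case True
          then have "{a, w} \<in> S" unfolding S_def by (rule imageI)
          then show ?thesis using True by simp
        qed auto
      qed
      also have "reach (V - {a}) ?G ((A - {a}) \<union> N g1) = reach (V - {a}) g2 (A' g1)"
        unfolding A'_def
      proof (rule reach_cong)
        fix u v assume "u \<in> V - {a}" "v \<in> V - {a}" "u \<noteq> v"
        then show "?G {u, v} = g2 {u, v}" using notS by simp
      qed
      finally have "reach V ?G A = insert a (reach (V - {a}) g2 (A' g1))" .
      moreover have "a \<notin> reach (V - {a}) g2 (A' g1)" using reach_subset[OF A'sub] by blast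
      moreover have "finite (reach (V - {a}) g2 (A' g1))"
        using reach_subset[OF A'sub] less.prems(2) by (meson finite_Diff finite_subset)
      ultimately show ?thesis by simp
    qed
    have IH': "(\<integral>\<^sup>+g2. ennreal (exp (lam * card (reach (V - {a}) g2 (A' g1)))) \<partial>Pi_pmf E2 False Bq)
          \<le> ennreal (F ^ card (A' g1))" for g1
      unfolding Bq_def
    proof (rule IH[OF cardV' finE2 _ A'sub])
      show "finite (V - {a})" using less.prems(2) by simp
      fix u v assume uv: "u \<in> V - {a}" "v \<in> V - {a}" "u \<noteq> v"
      have "{u, v} \<notin> S" by (rule notS[OF uv(1,2)])
      then show "{u, v} \<in> E2 \<and> q {u, v} \<le> \<beta>" using less.prems(4)[of u v] uv by (auto simp: E2_def)
    next
      fix e assume "e \<in> E2" then show "0 \<le> q e \<and> q e \<le> 1" using less.prems(5) by (auto simp: E2_def)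
    next
      show "card (V - {a}) \<le> m" using cardV' less.prems(6) by simp
    qed (use less.prems in auto)
    have prodN: "F ^ card (N g1) = (\<Prod>e\<in>S. if g1 e then F else 1)" for g1
    proof -
      have inj: "inj_on (\<lambda>w. {a, w}) (V - A)"
      proof (rule inj_onI)
        fix w w' assume w: "w \<in> V - A" "w' \<in> V - A" "{a, w} = {a, w'}"
        then have "w \<in> {a, w'}" by (metis insertCI)
        moreover have "w \<noteq> a" using w(1) aA by auto
        ultimately show "w = w'" by simp
      qed
      have "(\<Prod>e\<in>S. if g1 e then F else 1) = (\<Prod>w\<in>V - A. if g1 {a, w} then F else 1)"
        unfolding S_def by (subst prod.reindex[OF inj]) simp
      also have "\<dots> = (\<Prod>w\<in>N g1. F)"
        unfolding N_def by (rule prod.inter_filter[symmetric]) (use less.prems(2) in simp)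
      also have "\<dots> = F ^ card (N g1)" by simp
      finally show ?thesis by simp
    qed
    have cardS: "card S \<le> m"
    proof -
      have "card S \<le> card (V - A)" unfolding S_def by (rule card_image_le) (use less.prems(2) in simp)
      also have "\<dots> \<le> card V" using less.prems(2) by (simp add: card_mono)
      finally show ?thesis using less.prems(6) by simp
    qed
    have "(\<integral>\<^sup>+G. ennreal (exp (lam * card (reach V G A))) \<partial>Pi_pmf E False Bq)
        = (\<integral>\<^sup>+g1. \<integral>\<^sup>+g2. ennreal (exp lam) * ennreal (exp (lam * card (reach (V - {a}) g2 (A' g1))))
              \<partial>Pi_pmf E2 False Bq \<partial>Pi_pmf S False Bq)"
      unfolding Pi_split nn_integral_map_pmf nn_integral_pair_pmf'
      by (simp add: reach_eq ennreal_mult[symmetric] exp_add[symmetric] algebra_simps)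
    also have "\<dots> = (\<integral>\<^sup>+g1. ennreal (exp lam) * \<integral>\<^sup>+g2. ennreal (exp (lam * card (reach (V - {a}) g2 (A' g1))))
              \<partial>Pi_pmf E2 False Bq \<partial>Pi_pmf S False Bq)"
      by (simp add: nn_integral_cmult)
    also have "\<dots> \<le> (\<integral>\<^sup>+g1. ennreal (exp lam) * ennreal (F ^ card (A' g1)) \<partial>Pi_pmf S False Bq)"
      by (intro nn_integral_mono mult_left_mono IH') simp
    also have "\<dots> = (\<integral>\<^sup>+g1. ennreal (exp lam * F ^ (card A - 1)) * (\<Prod>e\<in>S. ennreal (if g1 e then F else 1)) \<partial>Pi_pmf S False Bq)"
    proof (intro nn_integral_cong)
      fix g1 :: "nat set \<Rightarrow> bool"
      have F1: "1 \<le> F" by (rule less.prems(7))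
      have e1: "F ^ card (A' g1) = F ^ (card A - 1) * (\<Prod>e\<in>S. if g1 e then F else 1)"
        by (simp add: cardA' power_add prodN)
      have e2: "(\<Prod>e\<in>S. ennreal (if g1 e then F else 1)) = ennreal (\<Prod>e\<in>S. if g1 e then F else 1)"
        using F1 by (intro prod_ennreal) auto
      have n1: "0 \<le> (\<Prod>e\<in>S. if g1 e then F else 1)" using F1 by (intro prod_nonneg) auto
      have n2: "0 \<le> F ^ (card A - 1)" using F1 by simp
      show "ennreal (exp lam) * ennreal (F ^ card (A' g1)) =
          ennreal (exp lam * F ^ (card A - 1)) * (\<Prod>e\<in>S. ennreal (if g1 e then F else 1))"
        unfolding e1 e2 using n1 n2
        by (simp add: ennreal_mult mult.assoc)
    qed
    also have "\<dots> = ennreal (exp lam * F ^ (card A - 1)) * (\<Prod>e\<in>S. \<integral>\<^sup>+b. ennreal (if b then F else 1) \<partial>Bq e)"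
      by (simp add: nn_integral_cmult nn_integral_prod_Pi_pmf[OF finS, where f="\<lambda>e b. ennreal (if b then F else 1)"])
    also have "\<dots> = ennreal (exp lam * F ^ (card A - 1)) * ennreal (\<Prod>e\<in>S. 1 + q e * (F - 1))"
    proof -
      have "(\<Prod>e\<in>S. \<integral>\<^sup>+b. ennreal (if b then F else 1) \<partial>Bq e) = (\<Prod>e\<in>S. ennreal (1 + q e * (F - 1)))"
      proof (rule prod.cong[OF refl])
        fix e assume "e \<in> S"
        then have "0 \<le> q e" "q e \<le> 1" using less.prems(5)[of e] SE by auto
        then show "(\<integral>\<^sup>+b. ennreal (if b then F else 1) \<partial>Bq e) = ennreal (1 + q e * (F - 1))"
          unfolding Bq_def using less.prems(7) by (rule bern_int)
      qed
      also have "\<dots> = ennreal (\<Prod>e\<in>S. 1 + q e * (F - 1))"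
      proof (rule prod_ennreal)
        fix e assume "e \<in> S"
        then have "0 \<le> q e" using less.prems(5)[of e] SE by auto
        then show "0 \<le> 1 + q e * (F - 1)" using less.prems(7) by simp
      qed
      finally show ?thesis by simp
    qed
    also have "\<dots> \<le> ennreal (exp lam * F ^ (card A - 1)) * ennreal ((1 + \<beta> * (F - 1)) ^ m)"
    proof -
      have "(\<Prod>e\<in>S. 1 + q e * (F - 1)) \<le> (\<Prod>e\<in>S. 1 + \<beta> * (F - 1))"
      proof (rule prod_mono)
        fix e assume "e \<in> S"
        then obtain w where w: "w \<in> V - A" "e = {a, w}" by (auto simp: S_def)
        then have "q e \<le> \<beta>" "0 \<le> q e" using less.prems(4)[of a w] less.prems(5)[of e] aV aA SE \<open>e \<in> S\<close> by auto
        then show "0 \<le> 1 + q e * (F - 1) \<and> 1 + q e * (F - 1) \<le> 1 + \<beta> * (F - 1)"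
          using less.prems(7) by (auto intro: mult_right_mono)
      qed
      also have "\<dots> = (1 + \<beta> * (F - 1)) ^ card S" by simp
      also have "\<dots> \<le> (1 + \<beta> * (F - 1)) ^ m"
        using cardS less.prems(7,8) by (intro power_increasing) auto
      finally show ?thesis by (intro mult_left_mono ennreal_leI) auto
    qed
    also have "\<dots> = ennreal (F ^ (card A - 1) * (exp lam * (1 + \<beta> * (F - 1)) ^ m))"
    proof -
      have x: "0 \<le> exp lam * F ^ (card A - 1)" using less.prems(7) by simp
      have y: "0 \<le> (1 + \<beta> * (F - 1)) ^ m" using less.prems(7,8) by simp
      have "ennreal (exp lam * F ^ (card A - 1)) * ennreal ((1 + \<beta> * (F - 1)) ^ m)
          = ennreal (exp lam * F ^ (card A - 1) * (1 + \<beta> * (F - 1)) ^ m)"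
        by (rule ennreal_mult[OF x y, symmetric])
      also have "exp lam * F ^ (card A - 1) * (1 + \<beta> * (F - 1)) ^ m
          = F ^ (card A - 1) * (exp lam * (1 + \<beta> * (F - 1)) ^ m)" by (simp add: mult_ac)
      finally show ?thesis .
    qed
    also have "\<dots> \<le> ennreal (F ^ (card A - 1) * F)"
      using less.prems(7) cond by (intro ennreal_leI mult_left_mono) auto
    also have "F ^ (card A - 1) * F = F ^ card A"
      using aA less.prems(2,3) card_gt_0_iff[of A]
      by (metis One_nat_def Suc_pred finite_subset empty_iff power_Suc2)
    finally show ?thesis unfolding Bq_def .
  qed
qed

lemma finite_edges_K: "finite (edges_K n)"
proof (rule finite_subset)
  show "edges_K n \<subseteq> Pow {1..n}" by (auto simp: edges_K_def)
qed simp

lemma open_comp_reach: "open_comp n G j = reach {1..n} G {j}"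
  by (simp add: open_comp_def reach_def erel_def)

lemma per_n:
  fixes p :: "nat set \<Rightarrow> real" and c t :: real and n :: nat
  assumes n1: "1 \<le> n" and c0: "0 < c" and c1: "c < 1"
    and pb: "\<And>e. e \<in> edges_K n \<Longrightarrow> 0 \<le> p e \<and> p e \<le> 1 \<and> p e \<le> c / real n"
  shows "measure_pmf.prob (random_graph n p) {G. \<forall>j \<in> {1..n}. real (card (open_comp n G j)) \<le> t}
           \<ge> 1 - real n * (1 / c) * exp (- (c - 1 - ln c) * t)"
proof -
  define lam where "lam = c - 1 - ln c"
  define P where "P = random_graph n p"
  have lam0: "0 \<le> lam" using ln_le_minus_one[OF c0] by (simp add: lam_def)
  have npos: "0 < real n" using n1 by simp
  have condF: "exp lam * (1 + c / real n * (1 / c - 1)) ^ n \<le> 1 / c"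
  proof -
    have eqb: "(1 + c / real n * (1 / c - 1)) = 1 + (1 - c) / real n"
      using c0 npos by (simp add: field_simps)
    have b0: "0 \<le> 1 + (1 - c) / real n" using c1 npos by simp
    have "(1 + c / real n * (1 / c - 1)) ^ n = (1 + (1 - c) / real n) ^ n" by (simp only: eqb)
    also have "\<dots> \<le> exp ((1 - c) / real n) ^ n"
      by (rule power_mono[OF exp_ge_add_one_self b0])
    finally have "(1 + c / real n * (1 / c - 1)) ^ n \<le> exp ((1 - c) / real n) ^ n" .
    also have "\<dots> = exp (1 - c)"
      using npos by (simp add: exp_of_nat_mult[symmetric])
    finally have "exp lam * (1 + c / real n * (1 / c - 1)) ^ n \<le> exp lam * exp (1 - c)"
      by (intro mult_left_mono) auto
    also have "\<dots> = exp (- ln c)" by (simp add: lam_def exp_add[symmetric])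
    also have "\<dots> = 1 / c" using c0 by (simp add: exp_minus inverse_eq_divide)
    finally show ?thesis .
  qed
  have keyj: "(\<integral>\<^sup>+G. ennreal (exp (lam * card (open_comp n G j))) \<partial>P) \<le> ennreal (1 / c)"
    if j: "j \<in> {1..n}" for j
  proof -
    have "(\<integral>\<^sup>+G. ennreal (exp (lam * card (reach {1..n} G {j}))) \<partial>Pi_pmf (edges_K n) False (\<lambda>e. bernoulli_pmf (p e)))
       \<le> ennreal ((1 / c) ^ card {j})"
    proof (rule key[where \<beta> = "c / real n" and m = n])
      fix u v assume "u \<in> {1..n}" "v \<in> {1..n}" "u \<noteq> v"
      then have "{u, v} \<in> edges_K n" by (auto simp: edges_K_def)
      then show "{u, v} \<in> edges_K n \<and> p {u, v} \<le> c / real n" using pb by auto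
    next
      fix e assume "e \<in> edges_K n" then show "0 \<le> p e \<and> p e \<le> 1" using pb by auto
    next
      show "exp lam * (1 + c / real n * (1 / c - 1)) ^ n \<le> 1 / c" by (rule condF)
    qed (use j c0 c1 npos finite_edges_K in auto)
    then show ?thesis by (simp add: P_def random_graph_def open_comp_reach)
  qed
  have markov: "measure_pmf.prob P {G. t < real (card (open_comp n G j))} \<le> (1 / c) * exp (- lam * t)"
    if j: "j \<in> {1..n}" for j
  proof -
    let ?X = "\<lambda>G. real (card (open_comp n G j))"
    have "emeasure (measure_pmf P) {G. t < ?X G} = (\<integral>\<^sup>+G. indicator {G. t < ?X G} G \<partial>P)"
      by simp
    also have "\<dots> \<le> (\<integral>\<^sup>+G. ennreal (exp (- lam * t)) * ennreal (exp (lam * ?X G)) \<partial>P)"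
    proof (intro nn_integral_mono)
      fix G
      show "indicator {G. t < ?X G} G \<le> ennreal (exp (- lam * t)) * ennreal (exp (lam * ?X G))"
      proof (cases "t < ?X G")
        case True
        have "0 \<le> lam * (?X G - t)" using lam0 True by simp
        then have "1 \<le> exp (- lam * t) * exp (lam * ?X G)"
          by (simp add: exp_add[symmetric] algebra_simps)
        then show ?thesis using True by (simp add: ennreal_mult[symmetric])
      qed simp
    qed
    also have "\<dots> = ennreal (exp (- lam * t)) * (\<integral>\<^sup>+G. ennreal (exp (lam * ?X G)) \<partial>P)"
      by (simp add: nn_integral_cmult)
    also have "\<dots> \<le> ennreal (exp (- lam * t)) * ennreal (1 / c)"
      by (intro mult_left_mono keyj[OF j]) simp
    also have "\<dots> = ennreal ((1 / c) * exp (- lam * t))"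
      using c0 by (simp add: ennreal_mult[symmetric] mult.commute)
    finally have "ennreal (measure_pmf.prob P {G. t < ?X G}) \<le> ennreal ((1 / c) * exp (- lam * t))"
      by (simp add: measure_pmf.emeasure_eq_measure)
    then show ?thesis using c0 by (subst (asm) ennreal_le_iff) auto
  qed
  define bad where "bad = (\<Union>j\<in>{1..n}. {G. t < real (card (open_comp n G j))})"
  have "measure_pmf.prob P bad \<le> (\<Sum>j\<in>{1..n}. measure_pmf.prob P {G. t < real (card (open_comp n G j))})"
    unfolding bad_def by (rule measure_pmf.finite_measure_subadditive_finite) auto
  also have "\<dots> \<le> (\<Sum>j\<in>{1..n}. (1 / c) * exp (- lam * t))"
    by (intro sum_mono markov)
  also have "\<dots> = real n * (1 / c) * exp (- lam * t)" by simp
  finally have badb: "measure_pmf.prob P bad \<le> real n * (1 / c) * exp (- lam * t)" .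
  have "{G. \<forall>j \<in> {1..n}. real (card (open_comp n G j)) \<le> t} = space (measure_pmf P) - bad"
    by (auto simp: bad_def not_less)
  then have "measure_pmf.prob P {G. \<forall>j \<in> {1..n}. real (card (open_comp n G j)) \<le> t}
      = measure_pmf.prob P (space (measure_pmf P) - bad)" by simp
  also have "\<dots> = 1 - measure_pmf.prob P bad"
    by (rule measure_pmf.prob_compl) simp
  finally have "measure_pmf.prob P {G. \<forall>j \<in> {1..n}. real (card (open_comp n G j)) \<le> t} = 1 - measure_pmf.prob P bad" .
  then show ?thesis using badb by (simp add: P_def lam_def)
qed

theorem theorem1:
  fixes C M \<theta> :: real and \<alpha> :: "nat \<Rightarrow> real" and p :: "nat \<Rightarrow> nat set \<Rightarrow> real"
  assumes C_pos: "0 < C" and C_lt1: "C < 1"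
    and alpha_nonneg: "\<And>n. 0 \<le> \<alpha> n"
    and alpha_lim: "\<alpha> \<longlonglongrightarrow> 0"
    and p_prob: "\<And>n e. e \<in> edges_K n \<Longrightarrow> 0 \<le> p n e \<and> p n e \<le> 1"
    and p_lower: "\<And>n e. e \<in> edges_K n \<Longrightarrow> (C - \<alpha> n) / real n \<le> p n e"
    and p_upper: "\<And>n e. e \<in> edges_K n \<Longrightarrow> p n e \<le> (C + \<alpha> n) / real n"
    and M_gt: "M > 1 / (C - 1 - ln C)"
    and theta_lt: "\<theta> < min (M * (C - 1 - ln C) - 1) 1"
  shows "\<exists>L1 > 0. \<forall>n. real n \<ge> L1 \<longrightarrow>
           measure_pmf.prob (random_graph n (p n))
             {G. \<forall>j \<in> {1..n}. real (card (open_comp n G j)) \<le> M * ln (real n)}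
           \<ge> 1 - 1 / (real n powr \<theta>)"
proof -
  define \<delta> where "\<delta> = C - 1 - ln C"
  have "ln C \<noteq> C - 1" using ln_eq_minus_one[OF C_pos] C_lt1 by auto
  then have \<delta>pos: "0 < \<delta>" using ln_le_minus_one[OF C_pos] by (simp add: \<delta>_def)
  have Mpos: "0 < M" using M_gt \<delta>pos unfolding \<delta>_def[symmetric]
    by (meson less_trans zero_less_divide_1_iff)
  define \<epsilon> where "\<epsilon> = (M * \<delta> - 1 - \<theta>) / 2"
  have \<epsilon>pos: "0 < \<epsilon>" using theta_lt by (simp add: \<epsilon>_def \<delta>_def)
  define c where "c = (\<lambda>n. C + \<alpha> n)"
  define lam where "lam = (\<lambda>n. c n - 1 - ln (c n))"
  have c_lim: "c \<longlonglongrightarrow> C"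
    using tendsto_add[OF tendsto_const alpha_lim, of C] by (simp add: c_def)
  have lam_lim: "lam \<longlonglongrightarrow> \<delta>"
    unfolding lam_def \<delta>_def using C_pos
    by (intro tendsto_intros c_lim) auto
  have ev1: "eventually (\<lambda>n. c n < 1) sequentially"
    by (rule order_tendstoD(2)[OF c_lim C_lt1])
  have ev2: "eventually (\<lambda>n. C / 2 < c n) sequentially"
    by (rule order_tendstoD(1)[OF c_lim]) (use C_pos in simp)
  have ev3: "eventually (\<lambda>n. \<delta> - \<epsilon> / M < lam n) sequentially"
    by (rule order_tendstoD(1)[OF lam_lim]) (use \<epsilon>pos Mpos in simp)
  define X where "X = max 1 ((2 / C) powr (1 / \<epsilon>))"
  have ev4: "eventually (\<lambda>n. X \<le> real n) sequentially"
    using eventually_ge_at_top[of "nat \<lceil>X\<rceil>"]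
    by eventually_elim (meson le_nat_iff of_nat_le_iff order_trans real_nat_ceiling_ge)
  from eventually_conj[OF ev1 eventually_conj[OF ev2 eventually_conj[OF ev3 ev4]]]
  obtain N where N: "\<And>n. n \<ge> N \<Longrightarrow> c n < 1 \<and> C / 2 < c n \<and> \<delta> - \<epsilon> / M < lam n \<and> X \<le> real n"
    unfolding eventually_sequentially by blast
  show ?thesis
  proof (intro exI[of _ "real N + 1"] conjI allI impI)
    show "0 < real N + 1" by simp
    fix n assume "real N + 1 \<le> real n"
    then have nN: "n \<ge> N" and n1: "1 \<le> n" by auto
    note Nn = N[OF nN]
    have npos: "0 < real n" using n1 by simp
    have cpos: "0 < c n" using Nn C_pos by linarith
    have "measure_pmf.prob (random_graph n (p n))
             {G. \<forall>j \<in> {1..n}. real (card (open_comp n G j)) \<le> M * ln (real n)}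
           \<ge> 1 - real n * (1 / c n) * exp (- (c n - 1 - ln (c n)) * (M * ln (real n)))"
    proof (rule per_n[OF n1 cpos])
      show "c n < 1" using Nn by simp
      fix e assume "e \<in> edges_K n"
      then show "0 \<le> p n e \<and> p n e \<le> 1 \<and> p n e \<le> c n / real n"
        using p_prob p_upper by (auto simp: c_def)
    qed
    moreover have "real n * (1 / c n) * exp (- (c n - 1 - ln (c n)) * (M * ln (real n)))
        \<le> 1 / (real n powr \<theta>)"
    proof -
      have eq1: "exp (- (c n - 1 - ln (c n)) * (M * ln (real n))) = real n powr (- (lam n * M))"
      proof -
        have "real n powr (- (lam n * M)) = exp (ln (real n) * (- (lam n * M)))"
          using npos by (simp add: powr_def)
        moreover have "- (c n - 1 - ln (c n)) * (M * ln (real n)) = ln (real n) * (- (lam n * M))"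
          by (simp add: lam_def algebra_simps)
        ultimately show ?thesis by simp
      qed
      have lamM: "1 + \<theta> + \<epsilon> \<le> lam n * M"
      proof -
        have "(\<delta> - \<epsilon> / M) * M \<le> lam n * M" using Nn Mpos by (intro mult_right_mono) auto
        moreover have "(\<delta> - \<epsilon> / M) * M = 1 + \<theta> + \<epsilon>"
          using Mpos by (simp add: \<epsilon>_def field_simps)
        ultimately show ?thesis by simp
      qed
      have "real n powr (- (lam n * M)) \<le> real n powr (- (1 + \<theta> + \<epsilon>))"
        using lamM n1 by (intro powr_mono) auto
      have nX: "X \<le> real n" using Nn by simp
      have "2 / C \<le> real n powr \<epsilon>"
      proof -
        have "2 / C = ((2 / C) powr (1 / \<epsilon>)) powr \<epsilon>"
          using \<epsilon>pos C_pos by (simp add: powr_powr)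
        also have "\<dots> \<le> real n powr \<epsilon>"
          using nX \<epsilon>pos by (intro powr_mono2) (auto simp: X_def)
        finally show ?thesis .
      qed
      have inv_c: "1 / c n \<le> 2 / C" using Nn C_pos cpos by (simp add: field_simps)
      have "real n * (1 / c n) * exp (- (c n - 1 - ln (c n)) * (M * ln (real n)))
           = (1 / c n) * (real n * real n powr (- (lam n * M)))" unfolding eq1 by simp
      also have "\<dots> \<le> (2 / C) * (real n * real n powr (- (1 + \<theta> + \<epsilon>)))"
        using inv_c \<open>real n powr (- (lam n * M)) \<le> real n powr (- (1 + \<theta> + \<epsilon>))\<close> npos cpos C_pos
        by (intro mult_mono mult_left_mono) auto
      also have "real n * real n powr (- (1 + \<theta> + \<epsilon>)) = real n powr (- \<theta>) * real n powr (- \<epsilon>)"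
        using npos by (simp add: powr_add[symmetric] powr_mult_base)
      also have "(2 / C) * (real n powr (- \<theta>) * real n powr (- \<epsilon>))
          = real n powr (- \<theta>) * ((2 / C) / real n powr \<epsilon>)"
        by (simp add: powr_minus divide_inverse)
      also have "\<dots> \<le> real n powr (- \<theta>) * 1"
      proof (rule mult_left_mono)
        have "0 < real n powr \<epsilon>" using npos by simp
        then show "(2 / C) / real n powr \<epsilon> \<le> 1"
          using \<open>2 / C \<le> real n powr \<epsilon>\<close> by (simp only: divide_le_eq_1_pos)
      qed simp
      also have "\<dots> = 1 / (real n powr \<theta>)" by (simp add: powr_minus divide_inverse)
      finally show ?thesis .
    qed
    ultimately show "1 - 1 / (real n powr \<theta>) \<le> measure_pmf.prob (random_graph n (p n))
             {G. \<forall>j \<in> {1..n}. real (card (open_comp n G j)) \<le> M * ln (real n)}"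
      by linarith
  qed
qed

end
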